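(* Let $n,N,L\ge1$ be integers and $0<p<1$. In the random model described in the context, for a read $(\mathbf{y},\mathbf{d}')\in\mathcal{Y}$ whose address part $\mathbf{y}$ has exactly $r$ erased positions, $$\mathbb{E}\big[|\mathcal{N}_{(\mathbf{y},\mathbf{d}')}|\;\big|\;(\mathbf{y},\mathbf{d}')\big]=N2^r(1+p)^{n-r}-1.$$ Further, $\mathbb{E}\big[|\mathcal{N}_{(\mathbf{y},\mathbf{d}')}|\big]=N(1+2p-p^2)^{n}-1$.
   Context: Model: Let $M=2^n$ and $C=\{0,1\}^n$ (addresses). Data parts are independent and uniform on $\{0,1\}^L$; each address $\mathbf{x}\in C$ carries one strand $(\mathbf{x},\mathbf{d})$. Each strand is transmitted $N$ times through $\mathsf{BEC}(p)$ (each symbol independently replaced by $*$ with probability $p$, independently across transmissions and strands); $\mathcal{Y}$ is the multiset of all $MN$ reads $(\mathbf{y},\mathbf{d}')$. An address $\mathbf{x}$ is compatible with a read $(\mathbf{y},\mathbf{d}')$ if $\mathbf{x}$ and $\mathbf{y}$ coincide at all non-erased positions of $\mathbf{y}$. The bipartite graph $\mathcal{G}$ has left vertices $C$, right vertices $\mathcal{Y}$, and an edge between $\mathbf{x}$ and $(\mathbf{y},\mathbf{d}')$ iff $\mathbf{x}$ is compatible with $(\mathbf{y},\mathbf{d}')$. The two-hop neighbourhood $\mathcal{N}_{(\mathbf{y},\mathbf{d}')}$ is the multiset of reads other than $(\mathbf{y},\mathbf{d}')$ itself that share at least one left neighbour with $(\mathbf{y},\mathbf{d}')$ in $\mathcal{G}$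 (equivalently, whose address part coincides with $\mathbf{y}$ at all positions where neither is erased). *)

theory Defs
  imports "HOL-Probability.Probability"
begin

definition erase_sym :: "real \<Rightarrow> 'a \<Rightarrow> 'a option pmf" where
  "erase_sym p a = map_pmf (\<lambda>e. if e then None else Some a) (bernoulli_pmf p)"

fun bec :: "real \<Rightarrow> 'a list \<Rightarrow> 'a option list pmf" where
  "bec p [] = return_pmf []"
| "bec p (a # xs) = bind_pmf (erase_sym p a) (\<lambda>b. map_pmf (\<lambda>bs. b # bs) (bec p xs))"

definition words :: "nat \<Rightarrow> bool list set" where
  "words n = {x. length x = n}"

type_synonym read = "bool option list \<times> bool option list"

text \<open>The random experiment: data parts D (independent uniform), and for every strand
  (x, D x), x in C = words n, and every transmission j < N, a read R (x, j) obtained by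
  passing the strand (address part and data part) through BEC(p).\<close>
definition dna_experiment :: "nat \<Rightarrow> nat \<Rightarrow> nat \<Rightarrow> real \<Rightarrow>
    ((bool list \<Rightarrow> bool list) \<times> (bool list \<times> nat \<Rightarrow> read)) pmf" where
  "dna_experiment n N L p =
     bind_pmf (Pi_pmf (words n) undefined (\<lambda>x. pmf_of_set (words L))) (\<lambda>D.
     bind_pmf (Pi_pmf (words n \<times> {..<N}) undefined
                 (\<lambda>(x, j). pair_pmf (bec p x) (bec p (D x)))) (\<lambda>R.
     return_pmf (D, R)))"

definition compatible :: "bool list \<Rightarrow> bool option list \<Rightarrow> bool" where
  "compatible x y \<longleftrightarrow> length y = length x \<and>
     (\<forall>i < length y. y ! i = None \<or> y ! i = Some (x ! i))"

definition share_neighbour :: "nat \<Rightarrow> read \<Rightarrow> read \<Rightarrow> bool" where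
  "share_neighbour n u v \<longleftrightarrow> (\<exists>z \<in> words n. compatible z (fst u) \<and> compatible z (fst v))"

text \<open>Size of the two-hop neighbourhood (as a multiset) of the read with index (x0, j0).\<close>
definition nbhd_size :: "nat \<Rightarrow> nat \<Rightarrow> (bool list \<times> nat \<Rightarrow> read) \<Rightarrow> bool list \<times> nat \<Rightarrow> nat" where
  "nbhd_size n N R k0 =
     card {k \<in> words n \<times> {..<N}. k \<noteq> k0 \<and> share_neighbour n (R k) (R k0)}"

definition num_erased :: "'a option list \<Rightarrow> nat" where
  "num_erased y = length (filter (\<lambda>c. c = None) y)"

end

theory Submission
  imports Defs
begin

lemma integral_cond_pmf:
  assumes "set_pmf M \<inter> S \<noteq> {}"
  shows "measure_pmf.expectation (cond_pmf M S) (f::_\<Rightarrow>real) =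
     measure_pmf.expectation M (\<lambda>x. indicator S x * f x) / measure_pmf.prob M S"
proof -
  have pos: "measure_pmf.prob M S > 0" using assms by (auto intro: measure_pmf_posI)
  have "measure_pmf (cond_pmf M S) = uniform_measure M S" using cond_pmf.rep_eq[OF assms] .
  also have "\<dots> = density M (\<lambda>x. ennreal (indicator S x / measure_pmf.prob M S))"
    unfolding uniform_measure_def
    by (intro density_cong) (auto simp: measure_pmf.emeasure_eq_measure divide_ennreal pos indicator_def ennreal_1[symmetric] simp del: ennreal_1)
  finally have m: "measure_pmf (cond_pmf M S) = density M (\<lambda>x. ennreal (indicator S x / measure_pmf.prob M S))" .
  show ?thesis unfolding m
    by (subst integral_density) (auto simp: mult.commute)
qed

definition Rc :: "bool option \<Rightarrow> bool option \<Rightarrow> bool" where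
  "Rc c d \<longleftrightarrow> c = None \<or> d = None \<or> c = d"

lemma bec_Cons': "bec p (a # xs) = map_pmf (\<lambda>(b, bs). b # bs) (pair_pmf (erase_sym p a) (bec p xs))"
  by (simp add: pair_pmf_def map_bind_pmf map_pmf_def bind_assoc_pmf bind_return_pmf)

lemma set_bec: "set_pmf (bec p x) \<subseteq> {a. list_all2 (\<lambda>c b. c = None \<or> c = Some b) a x}"
proof (induction x)
  case Nil then show ?case by simp
next
  case (Cons a xs)
  then show ?case
    by (auto simp: erase_sym_def split: if_splits)
qed

lemma finite_set_bec: "finite (set_pmf (bec p x))"
proof (induction x)
  case Nil then show ?case by simp
next
  case (Cons a xs)
  have "finite (set_pmf (erase_sym p a))"
    unfolding erase_sym_def by simp
  with Cons show ?case by simp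
qed

lemma compatible_Nil: "compatible [] y \<longleftrightarrow> y = []"
  by (auto simp: compatible_def)

lemma compatible_Cons: "compatible (z # zs) (c # cs) \<longleftrightarrow> (c = None \<or> c = Some z) \<and> compatible zs cs"
  unfolding compatible_def
  by (auto simp: nth_Cons split: nat.splits)

lemma compat_iff:
  "length a = length y \<Longrightarrow>
   (\<exists>z. length z = length y \<and> compatible z a \<and> compatible z y) \<longleftrightarrow> list_all2 Rc a y"
proof (induction a y rule: list_induct2)
  case Nil then show ?case by (auto simp: compatible_Nil)
next
  case (Cons c cs d ds)
  show ?case
  proof
    assume "\<exists>z. length z = length (d # ds) \<and> compatible z (c # cs) \<and> compatible z (d # ds)"
    then obtain z where z: "length z = length (d # ds)" "compatible z (c # cs)" "compatible z (d # ds)" by blast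
    then obtain w zs where zz: "z = w # zs" by (cases z) auto
    have "Rc c d" using z unfolding zz compatible_Cons by (auto simp: Rc_def)
    moreover have "list_all2 Rc cs ds" using z Cons.IH unfolding zz compatible_Cons by auto
    ultimately show "list_all2 Rc (c # cs) (d # ds)" by simp
  next
    assume "list_all2 Rc (c # cs) (d # ds)"
    then have h: "Rc c d" "list_all2 Rc cs ds" by auto
    then obtain zs where zs: "length zs = length ds" "compatible zs cs" "compatible zs ds"
      using Cons.IH by blast
    define w where "w = (case c of Some b \<Rightarrow> b | None \<Rightarrow> (case d of Some b \<Rightarrow> b | None \<Rightarrow> False))"
    have "compatible (w # zs) (c # cs)" "compatible (w # zs) (d # ds)"
      using h(1) zs unfolding compatible_Cons w_def Rc_def by (auto split: option.splits)
    then show "\<exists>z. length z = length (d # ds) \<and> compatible z (c # cs) \<and> compatible z (d # ds)"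
      using zs(1) by (intro exI[of _ "w # zs"]) auto
  qed
qed

definition wt :: "real \<Rightarrow> bool \<Rightarrow> bool option \<Rightarrow> real" where
  "wt p b c = (if c = None \<or> c = Some b then 1 else p)"

lemma prob_erase:
  assumes "0 \<le> p" "p \<le> 1"
  shows "measure_pmf.prob (erase_sym p b) {e. Rc e c} = wt p b c"
proof (cases c)
  case None
    have "(\<lambda>e. if e then None else Some b) -` {e. Rc e c} = UNIV"
      using None by (auto simp: Rc_def)
    then show ?thesis using None by (simp add: erase_sym_def wt_def)
next
  case (Some d)
  show ?thesis
  proof (cases "d = b")
    case True
    have "(\<lambda>e. if e then None else Some b) -` {e. Rc e c} = UNIV"
      using Some True by (auto simp: Rc_def)
    then show ?thesis using Some True by (simp add: erase_sym_def wt_def)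
  next
    case False
    have "(\<lambda>e. if e then None else Some b) -` {e. Rc e c} = {True}"
      using Some False by (auto simp: Rc_def)
    then show ?thesis using Some False assms
      by (simp add: erase_sym_def wt_def measure_pmf_single)
  qed
qed

lemma prob_bec:
  assumes "0 \<le> p" "p \<le> 1"
  shows "length x = length y \<Longrightarrow>
    measure_pmf.prob (bec p x) {a. list_all2 Rc a y} = prod_list (map2 (wt p) x y)"
proof (induction x y rule: list_induct2)
  case Nil then show ?case by simp
next
  case (Cons b bs c cs)
  have "(\<lambda>(e, es). e # es) -` {a. list_all2 Rc a (c # cs)} = {e. Rc e c} \<times> {es. list_all2 Rc es cs}"
    by (auto simp: list_all2_Cons2)
  then have "measure_pmf.prob (bec p (b # bs)) {a. list_all2 Rc a (c # cs)} =
     measure_pmf.prob (pair_pmf (erase_sym p b) (bec p bs)) ({e. Rc e c} \<times> {es. list_all2 Rc es cs})"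
    unfolding bec_Cons' by simp
  also have "\<dots> = wt p b c * prod_list (map2 (wt p) bs cs)"
    by (subst measure_pmf_prob_product) (auto simp: prob_erase assms Cons.IH)
  finally show ?case by simp
qed

definition words_cons :: "bool \<times> bool list \<Rightarrow> bool list" where
  "words_cons = (\<lambda>(b, bs). b # bs)"

lemma words_Suc: "words (Suc n) = words_cons ` (UNIV \<times> words n)"
proof
  show "words (Suc n) \<subseteq> words_cons ` (UNIV \<times> words n)"
  proof
    fix x assume "x \<in> words (Suc n)"
    then obtain b bs where "x = b # bs" "length bs = n"
      unfolding words_def by (cases x) auto
    then show "x \<in> words_cons ` (UNIV \<times> words n)"
      unfolding words_def words_cons_def by (intro image_eqI[of _ _ "(b, bs)"]) auto
  qed
  show "words_cons ` (UNIV \<times> words n) \<subseteq> words (Suc n)"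
    unfolding words_def words_cons_def by auto
qed

lemma inj_words_cons: "inj words_cons"
  unfolding words_cons_def inj_def by auto

lemma finite_words: "finite (words n)"
proof (induction n)
  case 0 then show ?case by (simp add: words_def)
next
  case (Suc n) then show ?case by (simp add: words_Suc)
qed

lemma sum_words:
  fixes g :: "bool \<Rightarrow> bool option \<Rightarrow> real"
  shows "length ys = n \<Longrightarrow> (\<Sum>x\<in>words n. prod_list (map2 g x ys)) = prod_list (map (\<lambda>c. g True c + g False c) ys)"
proof (induction ys arbitrary: n)
  case Nil then show ?case by (simp add: words_def)
next
  case (Cons c cs)
  then obtain m where n: "n = Suc m" "length cs = m" by auto
  have "(\<Sum>x\<in>words n. prod_list (map2 g x (c # cs))) =
        (\<Sum>bx\<in>UNIV \<times> words m. prod_list (map2 g (words_cons bx) (c # cs)))"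
    unfolding n words_Suc by (subst sum.reindex) (auto intro: inj_on_subset[OF inj_words_cons])
  also have "\<dots> = (\<Sum>b\<in>UNIV. \<Sum>x\<in>words m. g b c * prod_list (map2 g x cs))"
    by (simp add: sum.cartesian_product words_cons_def case_prod_unfold)
  also have "\<dots> = (\<Sum>b\<in>UNIV. g b c * (\<Sum>x\<in>words m. prod_list (map2 g x cs)))"
    by (simp add: sum_distrib_left)
  also have "\<dots> = (g True c + g False c) * prod_list (map (\<lambda>c. g True c + g False c) cs)"
    using Cons.IH[OF n(2)] by (simp add: UNIV_bool algebra_simps)
  finally show ?case by simp
qed

definition hval :: "real \<Rightarrow> bool option list \<Rightarrow> real" where
  "hval p y = prod_list (map (\<lambda>c. if c = None then 2 else 1 + p) y)"

lemma hval_Nil[simp]: "hval p [] = 1" by (simp add: hval_def)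
lemma hval_Cons[simp]: "hval p (c # y) = (if c = None then 2 else 1 + p) * hval p y"
  by (simp add: hval_def)

lemma hval_nonneg: "0 \<le> p \<Longrightarrow> 0 \<le> hval p y"
  by (induction y) auto

lemma hval_eq: "hval p y = 2 ^ num_erased y * (1 + p) ^ (length y - num_erased y)"
proof (induction y)
  case Nil then show ?case by (simp add: num_erased_def)
next
  case (Cons c y)
  have le: "num_erased y \<le> length y" unfolding num_erased_def by (rule length_filter_le)
  show ?case
  proof (cases c)
    case None
    then show ?thesis using Cons le by (simp add: num_erased_def)
  next
    case (Some b)
    then have "length (c # y) - num_erased (c # y) = Suc (length y - num_erased y)"
      using le by (simp add: num_erased_def Suc_diff_le)
    then show ?thesis using Cons Some by (simp add: num_erased_def)
  qed
qed

lemma sum_words_wt: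
  "length y = n \<Longrightarrow> (\<Sum>x\<in>words n. prod_list (map2 (wt p) x y)) = hval p y"
  by (subst sum_words) (auto simp: wt_def hval_def intro!: arg_cong[where f=prod_list])

lemma wt_one: "list_all2 (\<lambda>c b. c = None \<or> c = Some b) y x \<Longrightarrow> prod_list (map2 (wt p) x y) = 1"
  by (induction y x rule: list_all2_induct) (auto simp: wt_def)

lemma enn_aux:
  fixes K p :: real
  assumes "0 \<le> K" "0 \<le> p" "p \<le> 1"
  shows "2 * ennreal K * ennreal p + (1 + ennreal p) * ennreal K * ennreal (1 - p) =
         ennreal ((2 * p + (1 + p) * (1 - p)) * K)"
proof -
  have a: "1 + ennreal p = ennreal (1 + p)" using assms by simp
  have b: "(2::ennreal) = ennreal 2" by simp
  have "2 * ennreal K * ennreal p = ennreal (2 * K * p)"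
    using assms by (simp add: ennreal_mult)
  moreover have "ennreal (1 + p) * ennreal K * ennreal (1 - p) = ennreal ((1 + p) * K * (1 - p))"
    using assms by (simp add: ennreal_mult)
  moreover have "ennreal (2 * K * p) + ennreal ((1 + p) * K * (1 - p)) = ennreal ((2 * p + (1 + p) * (1 - p)) * K)"
    using assms mult_nonneg_nonneg[of "(1 + p) * K" "1 - p"] by (subst ennreal_plus[symmetric]) (auto simp: algebra_simps)
  ultimately show ?thesis unfolding a by simp
qed

lemma nn_hval:
  assumes "0 \<le> p" "p \<le> 1"
  shows "(\<integral>\<^sup>+u. ennreal (hval p u) \<partial>bec p x) = ennreal ((1 + 2 * p - p ^ 2) ^ length x)"
proof (induction x)
  case Nil then show ?case by simp
next
  case (Cons a xs)
  have "(\<integral>\<^sup>+u. ennreal (hval p u) \<partial>bec p (a # xs)) =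
     (\<integral>\<^sup>+e. \<integral>\<^sup>+u. ennreal (if e = None then 2 else 1 + p) * ennreal (hval p u) \<partial>bec p xs \<partial>erase_sym p a)"
    using assms by (simp add: ennreal_mult hval_nonneg)
  also have "\<dots> = (\<integral>\<^sup>+e. ennreal (if e = None then 2 else 1 + p) * ennreal ((1 + 2 * p - p ^ 2) ^ length xs) \<partial>erase_sym p a)"
    by (simp add: nn_integral_cmult Cons.IH)
  also have "\<dots> = ennreal ((1 + 2 * p - p ^ 2) ^ length (a # xs))"
  proof -
    have q0: "0 \<le> p * (2 - p)" using assms by (intro mult_nonneg_nonneg) auto
    have q: "0 \<le> 1 + 2 * p - p ^ 2" using q0 unfolding power2_eq_square by (simp add: algebra_simps)
    have e: "2 * p + (1 + p) * (1 - p) = 1 + 2 * p - p ^ 2" by (simp add: power2_eq_square algebra_simps)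
    have "(\<integral>\<^sup>+e. ennreal (if e = None then 2 else 1 + p) * ennreal ((1 + 2 * p - p ^ 2) ^ length xs) \<partial>erase_sym p a)
       = ennreal ((2 * p + (1 + p) * (1 - p)) * (1 + 2 * p - p ^ 2) ^ length xs)"
      unfolding erase_sym_def using assms q
      by (simp add: enn_aux)
    then show ?thesis unfolding e by simp
  qed
  finally show ?case .
qed

definition RD :: "real \<Rightarrow> (bool list \<Rightarrow> bool list) \<Rightarrow> bool list \<times> nat \<Rightarrow> read pmf" where
  "RD p D = (\<lambda>(x, j). pair_pmf (bec p x) (bec p (D x)))"

definition PD :: "nat \<Rightarrow> nat \<Rightarrow> (bool list \<Rightarrow> bool list) pmf" where
  "PD n L = Pi_pmf (words n) undefined (\<lambda>x. pmf_of_set (words L))"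

lemma dna_alt: "dna_experiment n N L p =
   bind_pmf (PD n L) (\<lambda>D. map_pmf (\<lambda>R. (D, R)) (Pi_pmf (words n \<times> {..<N}) undefined (RD p D)))"
  unfolding dna_experiment_def PD_def RD_def map_pmf_def by simp

lemma finite_K: "finite (words n \<times> {..<(N::nat)})"
  by (intro finite_cartesian_product finite_words finite_lessThan)

lemma struct1:
  assumes "k0 \<in> words n \<times> {..<N}"
  shows "map_pmf (\<lambda>(D, R). R k0) (dna_experiment n N L p) = bind_pmf (PD n L) (\<lambda>D. RD p D k0)"
  unfolding dna_alt map_bind_pmf
  by (simp add: map_pmf_comp Pi_pmf_component[OF finite_K] assms)

lemma pair_bind_left: "bind_pmf M (\<lambda>D. pair_pmf (A D) B) = pair_pmf (bind_pmf M A) B"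
  unfolding pair_pmf_def by (simp add: bind_assoc_pmf)

lemma struct2:
  assumes "k0 \<in> words n \<times> {..<N}" "k \<in> words n \<times> {..<N}" "k \<noteq> k0"
  shows "map_pmf (\<lambda>(D, R). (R k0, fst (R k))) (dna_experiment n N L p) =
         pair_pmf (bind_pmf (PD n L) (\<lambda>D. RD p D k0)) (bec p (fst k))"
proof -
  let ?K = "words n \<times> {..<N}"
  have ins: "?K = insert k (?K - {k})" using assms by auto
  have fin: "finite (?K - {k})" using finite_K by auto
  have inner: "map_pmf (\<lambda>R. (R k0, fst (R k))) (Pi_pmf ?K undefined (RD p D)) = pair_pmf (RD p D k0) (bec p (fst k))" for D
  proof -
    have "map_pmf (\<lambda>R. (R k0, fst (R k))) (Pi_pmf ?K undefined (RD p D)) =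
       map_pmf (\<lambda>(y, f). (f k0, fst y)) (pair_pmf (RD p D k) (Pi_pmf (?K - {k}) undefined (RD p D)))"
      by (subst ins, subst Pi_pmf_insert[OF fin]) (use assms in \<open>auto simp: map_pmf_comp case_prod_unfold\<close>)
    also have "\<dots> = map_pmf (\<lambda>(a, b). (b, a)) (map_pmf (\<lambda>(y, f). (fst y, f k0)) (pair_pmf (RD p D k) (Pi_pmf (?K - {k}) undefined (RD p D))))"
      by (simp add: map_pmf_comp case_prod_unfold)
    also have "\<dots> = map_pmf (\<lambda>(a, b). (b, a)) (pair_pmf (map_pmf fst (RD p D k)) (map_pmf (\<lambda>f. f k0) (Pi_pmf (?K - {k}) undefined (RD p D))))"
      by (subst map_pair[symmetric]) simp
    also have "\<dots> = pair_pmf (map_pmf (\<lambda>f. f k0) (Pi_pmf (?K - {k}) undefined (RD p D))) (map_pmf fst (RD p D k))"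
      by (rule pair_commute_pmf[symmetric])
    also have "\<dots> = pair_pmf (RD p D k0) (bec p (fst k))"
      using assms by (simp add: Pi_pmf_component[OF fin] RD_def case_prod_unfold map_fst_pair_pmf)
    finally show ?thesis .
  qed
  show ?thesis
    unfolding dna_alt map_bind_pmf
    by (simp add: map_pmf_comp inner pair_bind_left)
qed

lemma P0_fst: "map_pmf fst (bind_pmf (PD n L) (\<lambda>D. RD p D (x0, j0))) = bec p x0"
  by (simp add: map_bind_pmf RD_def map_fst_pair_pmf)

lemma integral_bind_pmf_bdd:
  fixes f :: "'b \<Rightarrow> real"
  assumes "\<And>x. \<bar>f x\<bar> \<le> B"
  shows "measure_pmf.expectation (bind_pmf M N) f = measure_pmf.expectation M (\<lambda>x. measure_pmf.expectation (N x) f)"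
proof -
  have N: "(\<lambda>x. measure_pmf (N x)) \<in> measurable (measure_pmf M) (subprob_algebra (count_space UNIV))"
    by measurable
  have "integral\<^sup>L (measure_pmf M \<bind> (\<lambda>x. measure_pmf (N x))) f = \<integral> x. integral\<^sup>L (measure_pmf (N x)) f \<partial>measure_pmf M"
  proof (rule integral_bind[where K="count_space UNIV" and B=B and B'=1])
    show "f \<in> borel_measurable (count_space UNIV)" by simp
    show "\<And>x. x \<in> space (count_space UNIV) \<Longrightarrow> \<bar>f x\<bar> \<le> B" using assms by simp
    show "(\<lambda>x. measure_pmf (N x)) \<in> measurable (measure_pmf M) (subprob_algebra (count_space UNIV))" by (rule N)
    show "finite_measure (measure_pmf M)" by (rule prob_space.finite_measure) (rule measure_pmf.prob_space_axioms)
    show "AE x in measure_pmf M. emeasure (measure_pmf (N x)) (space (measure_pmf (N x))) \<le> ennreal 1"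
      by (simp add: measure_pmf.emeasure_space_1)
  qed
  then show ?thesis unfolding measure_pmf_bind .
qed

lemma card_filter_sum: "finite A \<Longrightarrow> real (card {k \<in> A. P k}) = (\<Sum>k\<in>A. if P k then 1 else 0)"
proof -
  assume "finite A"
  then have "(\<Sum>k\<in>A. if P k then 1 else 0) = (\<Sum>k\<in>{k \<in> A. P k}. (1::real))"
    by (rule sum.inter_filter[symmetric])
  then show ?thesis by simp
qed

lemma prob_S:
  assumes "0 \<le> p" "p \<le> 1" "x \<in> words n" "length y = n"
  shows "measure_pmf.prob (bec p x) {a. \<exists>z\<in>words n. compatible z a \<and> compatible z y} = prod_list (map2 (wt p) x y)"
proof -
  have eq: "(\<exists>z\<in>words n. compatible z a \<and> compatible z y) \<longleftrightarrow> list_all2 Rc a y"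
    if a: "a \<in> set_pmf (bec p x)" for a
  proof -
    have "list_all2 (\<lambda>c b. c = None \<or> c = Some b) a x" using set_bec[of p x] a by blast
    then have "length a = length x" by (rule list_all2_lengthD)
    then have la: "length a = length y" using assms(3,4) by (simp add: words_def)
    have "(\<exists>z\<in>words n. compatible z a \<and> compatible z y) \<longleftrightarrow> (\<exists>z. length z = length y \<and> compatible z a \<and> compatible z y)"
      using assms(4) unfolding words_def by auto
    also have "\<dots> \<longleftrightarrow> list_all2 Rc a y" by (rule compat_iff[OF la])
    finally show ?thesis .
  qed
  have seteq: "{a. \<exists>z\<in>words n. compatible z a \<and> compatible z y} \<inter> set_pmf (bec p x) =
        {a. list_all2 Rc a y} \<inter> set_pmf (bec p x)" (is "?A \<inter> _ = ?B \<inter> _")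
  proof (rule set_eqI)
    fix a
    show "a \<in> ?A \<inter> set_pmf (bec p x) \<longleftrightarrow> a \<in> ?B \<inter> set_pmf (bec p x)"
    proof (cases "a \<in> set_pmf (bec p x)")
      case True then show ?thesis using eq[OF True] by simp
    next
      case False then show ?thesis by simp
    qed
  qed
  have "measure_pmf.prob (bec p x) ?A = measure_pmf.prob (bec p x) (?A \<inter> set_pmf (bec p x))"
    by (rule measure_Int_set_pmf[symmetric])
  also have "\<dots> = measure_pmf.prob (bec p x) (?B \<inter> set_pmf (bec p x))"
    by (simp only: seteq)
  also have "\<dots> = measure_pmf.prob (bec p x) ?B"
    by (rule measure_Int_set_pmf)
  also have "\<dots> = prod_list (map2 (wt p) x y)"
    using prob_bec[OF assms(1,2)] assms(3,4) by (simp add: words_def)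
  finally show ?thesis .
qed

lemma cond_part:
  fixes n N L :: nat and p :: real and x0 :: "bool list" and j0 :: nat and v :: read
  assumes "0 < p" "p < 1" "x0 \<in> words n" "j0 < N"
    and v: "v \<in> set_pmf (map_pmf (\<lambda>(D, R). R (x0, j0)) (dna_experiment n N L p))"
  shows "measure_pmf.expectation
              (cond_pmf (dna_experiment n N L p) {(D, R). R (x0, j0) = v})
              (\<lambda>(D, R). real (nbhd_size n N R (x0, j0)))
         = real N * hval p (fst v) - 1 \<and> length (fst v) = n"
proof -
  define \<Omega> where "\<Omega> = dna_experiment n N L p"
  define K where "K = words n \<times> {..<N}"
  define k0 where "k0 = (x0, j0)"
  define P0 where "P0 = bind_pmf (PD n L) (\<lambda>D. RD p D k0)"
  define E where "E = {(D::bool list \<Rightarrow> bool list, R::bool list \<times> nat \<Rightarrow> read). R k0 = v}"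
  obtain y d' where yd: "v = (y, d')" by (cases v)
  define S where "S = {a. \<exists>z\<in>words n. compatible z a \<and> compatible z y}"
  have k0K: "k0 \<in> K" using assms unfolding K_def k0_def by auto
  have finK: "finite K" unfolding K_def by (rule finite_K)
  have M0: "map_pmf (\<lambda>(D, R). R k0) \<Omega> = P0"
    unfolding \<Omega>_def P0_def by (rule struct1) (use k0K in \<open>simp add: K_def\<close>)
  have vP0: "v \<in> set_pmf P0" using v M0 unfolding \<Omega>_def k0_def by simp
  have "y \<in> set_pmf (map_pmf fst P0)" using vP0 yd by force
  then have ybec: "y \<in> set_pmf (bec p x0)" unfolding P0_def k0_def P0_fst .
  then have ya: "list_all2 (\<lambda>c b. c = None \<or> c = Some b) y x0" using set_bec by blast
  then have leny: "length y = n" using assms(3) by (auto simp: words_def dest: list_all2_lengthD)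
  have "v \<in> (\<lambda>(D, R). R k0) ` set_pmf \<Omega>" using v by (simp add: \<Omega>_def k0_def)
  then obtain \<omega> where om: "\<omega> \<in> set_pmf \<Omega>" "v = (case \<omega> of (D, R) \<Rightarrow> R k0)" by blast
  have ne: "set_pmf \<Omega> \<inter> E \<noteq> {}"
    using om unfolding E_def by (cases \<omega>) auto
  have pE: "measure_pmf.prob \<Omega> E = measure_pmf.prob P0 {v}"
  proof -
    have "(\<lambda>(D, R). R k0) -` {v} = E" unfolding E_def by auto
    then show ?thesis using M0[symmetric] by simp
  qed
  have pos: "measure_pmf.prob P0 {v} > 0"
    using vP0 by (auto intro: measure_pmf_posI)
  define g where "g k = (\<lambda>(D::bool list \<Rightarrow> bool list, R::bool list \<times> nat \<Rightarrow> read). (R k0, fst (R k)))" for k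
  have pw: "indicator E \<omega> * (case \<omega> of (D, R) \<Rightarrow> real (nbhd_size n N R k0)) =
            (\<Sum>k\<in>K - {k0}. indicator ({v} \<times> S) (g k \<omega>))" for \<omega>
  proof (cases \<omega>)
    case (Pair D R)
    show ?thesis
    proof (cases "R k0 = v")
      case False
      then show ?thesis using Pair by (simp add: E_def g_def indicator_def)
    next
      case True
      have seteq: "{k \<in> K. k \<noteq> k0 \<and> share_neighbour n (R k) (R k0)} = {k \<in> K - {k0}. fst (R k) \<in> S}"
        using True yd by (auto simp: share_neighbour_def S_def)
      have c: "real (card {k \<in> K - {k0}. fst (R k) \<in> S}) = (\<Sum>k\<in>K - {k0}. if fst (R k) \<in> S then 1 else 0)"
        using finK by (intro card_filter_sum) simp
      have "nbhd_size n N R k0 = card {k \<in> K - {k0}. fst (R k) \<in> S}"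
        unfolding nbhd_size_def K_def[symmetric] by (simp only: seteq)
      then have "real (nbhd_size n N R k0) = (\<Sum>k\<in>K - {k0}. if fst (R k) \<in> S then 1 else 0)"
        using c by simp
      then show ?thesis using Pair True by (simp add: E_def g_def indicator_def of_bool_def)
    qed
  qed
  have termk: "measure_pmf.expectation \<Omega> (\<lambda>\<omega>. indicator ({v} \<times> S) (g k \<omega>) :: real) =
       measure_pmf.prob P0 {v} * measure_pmf.prob (bec p (fst k)) S" if "k \<in> K - {k0}" for k
  proof -
    have mp: "map_pmf (g k) \<Omega> = pair_pmf P0 (bec p (fst k))"
      unfolding g_def \<Omega>_def P0_def by (rule struct2) (use that k0K in \<open>auto simp: K_def\<close>)
    have "measure_pmf.expectation \<Omega> (\<lambda>\<omega>. indicator ({v} \<times> S) (g k \<omega>) :: real) =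
       measure_pmf.expectation (map_pmf (g k) \<Omega>) (indicator ({v} \<times> S) :: _ \<Rightarrow> real)"
      by (rule integral_map_pmf[of "g k" \<Omega> "indicator ({v} \<times> S)", symmetric])
    also have "\<dots> = measure_pmf.expectation (pair_pmf P0 (bec p (fst k))) (indicator ({v} \<times> S) :: _ \<Rightarrow> real)"
      by (simp only: mp)
    also have "\<dots> = measure_pmf.prob (pair_pmf P0 (bec p (fst k))) ({v} \<times> S)" by simp
    also have "\<dots> = measure_pmf.prob P0 {v} * measure_pmf.prob (bec p (fst k)) S"
      by (rule measure_pmf_prob_product) (auto intro: countableI_type)
    finally show ?thesis .
  qed
  have "measure_pmf.expectation (cond_pmf \<Omega> E) (\<lambda>(D, R). real (nbhd_size n N R k0)) =
        measure_pmf.expectation \<Omega> (\<lambda>\<omega>. indicator E \<omega> * (case \<omega> of (D, R) \<Rightarrow> real (nbhd_size n N R k0))) / measure_pmf.prob \<Omega> E"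
    by (rule integral_cond_pmf[OF ne])
  also have "\<dots> = (\<Sum>k\<in>K - {k0}. measure_pmf.expectation \<Omega> (\<lambda>\<omega>. indicator ({v} \<times> S) (g k \<omega>) :: real)) / measure_pmf.prob P0 {v}"
  proof -
    have int: "integrable \<Omega> (\<lambda>\<omega>. indicator ({v} \<times> S) (g k \<omega>) :: real)" for k
      by (rule measure_pmf.integrable_const_bound[where B=1]) (auto simp: indicator_def)
    show ?thesis unfolding pw pE
      using Bochner_Integration.integral_sum[where I="K - {k0}" and f="\<lambda>k \<omega>. indicator ({v} \<times> S) (g k \<omega>) :: real"] int by simp
  qed
  also have "\<dots> = (\<Sum>k\<in>K - {k0}. measure_pmf.prob (bec p (fst k)) S)"
  proof -
    have "(\<Sum>k\<in>K - {k0}. measure_pmf.expectation \<Omega> (\<lambda>\<omega>. indicator ({v} \<times> S) (g k \<omega>) :: real)) =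
          measure_pmf.prob P0 {v} * (\<Sum>k\<in>K - {k0}. measure_pmf.prob (bec p (fst k)) S)"
      unfolding sum_distrib_left by (rule sum.cong[OF refl]) (rule termk)
    then show ?thesis using pos by simp
  qed
  also have "\<dots> = (\<Sum>k\<in>K - {k0}. prod_list (map2 (wt p) (fst k) y))"
    using assms leny by (intro sum.cong refl) (auto simp: S_def K_def intro!: prob_S)
  also have "\<dots> = (\<Sum>k\<in>K. prod_list (map2 (wt p) (fst k) y)) - prod_list (map2 (wt p) (fst k0) y)"
    using finK k0K by (simp add: sum_diff1)
  also have "\<dots> = real N * hval p y - 1"
  proof -
    have "(\<Sum>k\<in>K. prod_list (map2 (wt p) (fst k) y)) = (\<Sum>x\<in>words n. \<Sum>j\<in>{..<N}. prod_list (map2 (wt p) x y))"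
    proof -
      have "(\<Sum>k\<in>K. prod_list (map2 (wt p) (fst k) y)) = (\<Sum>(x, j)\<in>words n \<times> {..<N}. prod_list (map2 (wt p) x y))"
        unfolding K_def by (simp add: case_prod_unfold)
      also have "\<dots> = (\<Sum>x\<in>words n. \<Sum>j\<in>{..<N}. prod_list (map2 (wt p) x y))"
        by (rule sum.cartesian_product[symmetric])
      finally show ?thesis .
    qed
    also have "\<dots> = real N * hval p y"
      using sum_words_wt[OF leny, of p] by (simp add: sum_distrib_left[symmetric])
    finally show ?thesis using wt_one[OF ya] by (simp add: k0_def)
  qed
  finally show ?thesis using yd leny unfolding \<Omega>_def E_def k0_def by simp
qed

lemma nbhd_bound: "nbhd_size n N R k0 \<le> card (words n \<times> {..<N})"
  unfolding nbhd_size_def by (rule card_mono[OF finite_K]) auto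

lemma E_hval:
  assumes "0 \<le> p" "p \<le> 1"
  shows "measure_pmf.expectation (bec p x) (hval p) = (1 + 2 * p - p ^ 2) ^ length x"
proof -
  have q0: "0 \<le> p * (2 - p)" using assms by (intro mult_nonneg_nonneg) auto
  have q: "0 \<le> 1 + 2 * p - p ^ 2" using q0 unfolding power2_eq_square by (simp add: algebra_simps)
  have "measure_pmf.expectation (bec p x) (hval p) = enn2real (\<integral>\<^sup>+u. ennreal (hval p u) \<partial>bec p x)"
    by (rule integral_eq_nn_integral) (auto simp: hval_nonneg assms)
  also have "\<dots> = (1 + 2 * p - p ^ 2) ^ length x"
    using nn_hval[OF assms] q by simp
  finally show ?thesis .
qed

theorem lemma5:
  fixes n N L :: nat and p :: real and x0 :: "bool list" and j0 :: nat
  assumes "n \<ge> 1" and "N \<ge> 1" and "L \<ge> 1" and "0 < p" and "p < 1"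
    and "x0 \<in> words n" and "j0 < N"
  shows "(\<forall>y d'. (y, d') \<in> set_pmf (map_pmf (\<lambda>(D, R). R (x0, j0)) (dna_experiment n N L p)) \<longrightarrow>
            measure_pmf.expectation
              (cond_pmf (dna_experiment n N L p) {(D, R). R (x0, j0) = (y, d')})
              (\<lambda>(D, R). real (nbhd_size n N R (x0, j0)))
            = real N * 2 ^ num_erased y * (1 + p) ^ (n - num_erased y) - 1)
       \<and> measure_pmf.expectation (dna_experiment n N L p)
              (\<lambda>(D, R). real (nbhd_size n N R (x0, j0)))
            = real N * (1 + 2 * p - p ^ 2) ^ n - 1"
proof -
  define \<Omega> where "\<Omega> = dna_experiment n N L p"
  define k0 where "k0 = (x0, j0)"
  define M0 where "M0 = map_pmf (\<lambda>(D, R). R k0) \<Omega>"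
  define f where "f = (\<lambda>(D::bool list \<Rightarrow> bool list, R). real (nbhd_size n N R k0))"
  have cp: "measure_pmf.expectation (cond_pmf \<Omega> {(D, R). R k0 = v}) f = real N * hval p (fst v) - 1
            \<and> length (fst v) = n" if "v \<in> set_pmf M0" for v
    using cond_part[OF assms(4,5,6,7), of v L] that unfolding M0_def \<Omega>_def k0_def f_def by simp
  have part1: "\<forall>y d'. (y, d') \<in> set_pmf M0 \<longrightarrow>
      measure_pmf.expectation (cond_pmf \<Omega> {(D, R). R k0 = (y, d')}) f
      = real N * 2 ^ num_erased y * (1 + p) ^ (n - num_erased y) - 1"
  proof (intro allI impI)
    fix y d' assume "(y, d') \<in> set_pmf M0"
    from cp[OF this] show "measure_pmf.expectation (cond_pmf \<Omega> {(D, R). R k0 = (y, d')}) f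
      = real N * 2 ^ num_erased y * (1 + p) ^ (n - num_erased y) - 1"
      by (simp add: hval_eq)
  qed
  have sets: "{(D, R). R k0 = v} = {\<omega>. snd \<omega> k0 = v}" for v :: read by auto
  have cancel: "bind_pmf M0 (\<lambda>v. cond_pmf \<Omega> {\<omega>. snd \<omega> k0 = v}) = \<Omega>"
  proof (rule bind_cond_pmf_cancel)
    fix v assume "v \<in> set_pmf M0"
    then show "set_pmf \<Omega> \<inter> {\<omega>. snd \<omega> k0 = v} \<noteq> {}" unfolding M0_def by auto
  next
    fix \<omega> assume "\<omega> \<in> set_pmf \<Omega>"
    then show "set_pmf M0 \<inter> {v. snd \<omega> k0 = v} \<noteq> {}" unfolding M0_def by (cases \<omega>) auto
  next
    fix v :: read and \<omega> :: "(bool list \<Rightarrow> bool list) \<times> (bool list \<times> nat \<Rightarrow> read)"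
    assume "snd \<omega> k0 = v"
    have pre: "(\<lambda>(D, R). R k0) -` {v} = {\<omega>. snd \<omega> k0 = v}" by auto
    have sv: "{v'. snd \<omega> k0 = v'} = {v}" using \<open>snd \<omega> k0 = v\<close> by auto
    show "measure_pmf.prob \<Omega> {\<omega>. snd \<omega> k0 = v} = measure_pmf.prob M0 {v'. snd \<omega> k0 = v'}"
      by (simp only: M0_def measure_map_pmf sv pre)
  qed
  have bnd: "\<bar>f \<omega>\<bar> \<le> real (card (words n \<times> {..<N}))" for \<omega>
    unfolding f_def using nbhd_bound by (cases \<omega>) (simp add: of_nat_le_iff)
  have "measure_pmf.expectation \<Omega> f = measure_pmf.expectation (bind_pmf M0 (\<lambda>v. cond_pmf \<Omega> {\<omega>. snd \<omega> k0 = v})) f"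
    by (simp only: cancel)
  also have "\<dots> = measure_pmf.expectation M0 (\<lambda>v. measure_pmf.expectation (cond_pmf \<Omega> {\<omega>. snd \<omega> k0 = v}) f)"
    by (rule integral_bind_pmf_bdd[OF bnd])
  also have "\<dots> = measure_pmf.expectation M0 (\<lambda>v. real N * hval p (fst v) - 1)"
  proof (rule integral_cong_AE)
    show "AE v in M0. measure_pmf.expectation (cond_pmf \<Omega> {\<omega>. snd \<omega> k0 = v}) f = real N * hval p (fst v) - 1"
      using cp by (intro AE_pmfI) (simp add: sets)
  qed simp_all
  also have "\<dots> = measure_pmf.expectation (map_pmf fst M0) (\<lambda>y. real N * hval p y - 1)"
    by simp
  also have "map_pmf fst M0 = bec p x0"
  proof -
    have "M0 = bind_pmf (PD n L) (\<lambda>D. RD p D k0)"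
      unfolding M0_def \<Omega>_def by (rule struct1) (use assms(6,7) in \<open>simp add: k0_def\<close>)
    then show ?thesis unfolding k0_def by (simp add: P0_fst)
  qed
  also have "measure_pmf.expectation (bec p x0) (\<lambda>y. real N * hval p y - 1) =
             real N * measure_pmf.expectation (bec p x0) (hval p) - 1"
  proof -
    have int: "integrable (measure_pmf (bec p x0)) (hval p)"
      by (rule integrable_measure_pmf_finite[OF finite_set_bec])
    have int2: "integrable (measure_pmf (bec p x0)) (\<lambda>y. real N * hval p y)"
      by (rule integrable_measure_pmf_finite[OF finite_set_bec])
    have "measure_pmf.expectation (bec p x0) (\<lambda>y. real N * hval p y - 1) =
          measure_pmf.expectation (bec p x0) (\<lambda>y. real N * hval p y) - measure_pmf.expectation (bec p x0) (\<lambda>y. 1)"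
      by (rule Bochner_Integration.integral_diff[OF int2]) simp
    then show ?thesis by simp
  qed
  also have "\<dots> = real N * (1 + 2 * p - p ^ 2) ^ n - 1"
    using E_hval[of p x0] assms(4,5,6) by (simp add: words_def)
  finally have part2: "measure_pmf.expectation \<Omega> f = real N * (1 + 2 * p - p ^ 2) ^ n - 1" .
  show ?thesis
    using part1 part2 unfolding \<Omega>_def M0_def k0_def f_def by simp
qed

end
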